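(* Let $m=2k+1$ with $k\in\mathbb{N}$ and $\beta\in(1,k+2)$. For $i\in\{1,\ldots,k\}$ the fixed point $\frac{i}{\beta-1}$ of $T_{\beta,i}$ lies in the interior of $[\frac{i}{\beta},\frac{(i-1)\beta+m-(i-1)}{\beta(\beta-1)}]$, and for $i\in\{k+1,\ldots,m-1\}$ it lies in the interior of $[\frac{i+1}{\beta},\frac{i\beta+m-i}{\beta(\beta-1)}]$.
   Context: $T_{\beta,i}(x)=\beta x-i$. *)

theory Defs
  imports "HOL-Analysis.Analysis"
begin

definition T :: "real \<Rightarrow> nat \<Rightarrow> real \<Rightarrow> real" where
  "T \<beta> i x = \<beta> * x - real i"

end

theory Submission
  imports Defs
begin

lemma int_iv: "(a::real) < x \<Longrightarrow> x < b \<Longrightarrow> x \<in> interior {a..b}"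
  by simp

theorem lemma3p3:
  fixes k m :: nat and \<beta> :: real
  assumes hm: "m = 2 * k + 1"
    and hb1: "1 < \<beta>" and hb2: "\<beta> < real k + 2"
  shows "(\<forall>i\<in>{1..k}.
            T \<beta> i (real i / (\<beta> - 1)) = real i / (\<beta> - 1) \<and>
            real i / (\<beta> - 1) \<in> interior {real i / \<beta> ..
               ((real i - 1) * \<beta> + real m - (real i - 1)) / (\<beta> * (\<beta> - 1))})
       \<and> (\<forall>i\<in>{k+1..m-1}.
            T \<beta> i (real i / (\<beta> - 1)) = real i / (\<beta> - 1) \<and>
            real i / (\<beta> - 1) \<in> interior {(real i + 1) / \<beta> ..
               (real i * \<beta> + real m - real i) / (\<beta> * (\<beta> - 1))})"
proof -
  have p: "\<beta> - 1 > 0" "\<beta> > 0" "\<beta> * (\<beta> - 1) > 0" using hb1 by auto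
  have fx: "T \<beta> i (real i / (\<beta> - 1)) = real i / (\<beta> - 1)" for i
    using p by (simp add: T_def field_simps)
  show ?thesis
  proof (intro conjI ballI)
    fix i assume i: "i \<in> {1..k}"
    hence ri: "real i \<ge> 1" "real i \<le> real k" by auto
    show "T \<beta> i (real i / (\<beta> - 1)) = real i / (\<beta> - 1)" by (rule fx)
    have m: "real m = 2 * real k + 1" using hm by simp
    show "real i / (\<beta> - 1) \<in> interior {real i / \<beta> ..
               ((real i - 1) * \<beta> + real m - (real i - 1)) / (\<beta> * (\<beta> - 1))}"
    proof (rule int_iv)
      show "real i / \<beta> < real i / (\<beta> - 1)"
        using p ri by (simp add: field_simps)
      have "real i * \<beta> < (real i - 1) * \<beta> + real m - (real i - 1)"
        using m ri hb2 by (simp add: algebra_simps)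
      hence "real i * \<beta> / (\<beta> * (\<beta> - 1)) < ((real i - 1) * \<beta> + real m - (real i - 1)) / (\<beta> * (\<beta> - 1))"
        using p by (intro divide_strict_right_mono) auto
      moreover have "real i * \<beta> / (\<beta> * (\<beta> - 1)) = real i / (\<beta> - 1)"
        using p by simp
      ultimately show "real i / (\<beta> - 1) < ((real i - 1) * \<beta> + real m - (real i - 1)) / (\<beta> * (\<beta> - 1))"
        using p by simp
    qed
  next
    fix i assume i: "i \<in> {k+1..m-1}"
    hence ri: "real i \<ge> real k + 1" "real i < real m" using hm by auto
    show "T \<beta> i (real i / (\<beta> - 1)) = real i / (\<beta> - 1)" by (rule fx)
    show "real i / (\<beta> - 1) \<in> interior {(real i + 1) / \<beta> ..
               (real i * \<beta> + real m - real i) / (\<beta> * (\<beta> - 1))}"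
    proof (rule int_iv)
      have "(real i + 1) * (\<beta> - 1) < real i * \<beta>" using ri hb2 by (simp add: algebra_simps)
      thus "(real i + 1) / \<beta> < real i / (\<beta> - 1)"
        using p by (simp add: field_simps)
      have "real i * \<beta> < real i * \<beta> + real m - real i" using ri by simp
      hence "real i * \<beta> / (\<beta> * (\<beta> - 1)) < (real i * \<beta> + real m - real i) / (\<beta> * (\<beta> - 1))"
        using p by (intro divide_strict_right_mono) auto
      moreover have "real i * \<beta> / (\<beta> * (\<beta> - 1)) = real i / (\<beta> - 1)"
        using p by simp
      ultimately show "real i / (\<beta> - 1) < (real i * \<beta> + real m - real i) / (\<beta> * (\<beta> - 1))"
        by simp
    qed
  qed
qed

end
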